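(* Let $n\ge2$ and $D=\mathrm{pdiag}(d_1,\dots,d_n)$ with $d_1\le\dots\le d_n$. Then $\Gamma(D_\lambda)=D_\lambda\oplus D_\lambda^2$.
   Context: Max-plus conventions: $\varepsilon=-\infty$, $\oplus=\max$ (entrywise for matrices), $\otimes=+$, $(A\otimes B)_{ij}=\max_t(A_{it}+B_{tj})$, $A^k$ the $k$-fold max-plus power, $(\alpha\otimes A)_{ij}=\alpha+A_{ij}$. $\mathrm{pdiag}(d_1,\dots,d_n)$ is the matrix with real diagonal entries $d_i$ and off-diagonal entries equal to the real number $0$. For finite $A\in\mathbb{R}^{n\times n}$: $\lambda(A)$ is the maximum cycle mean $\max\{(a_{i_1i_2}+\dots+a_{i_ki_1})/k\}$ over $k\ge1$ and distinct $i_1,\dots,i_k\in[n]$; $A_\lambda=(-\lambda(A))\otimes A$; $\Gamma(A)=A\oplus A^2\oplus\dots\oplus A^n$. *)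

theory Defs
  imports Main "HOL.Real"
begin

(* Finite n x n real matrices, represented as functions on indices 0..n-1
   (entries outside {..<n} are irrelevant). Max-plus operations. *)
type_synonym mat = "nat \<Rightarrow> nat \<Rightarrow> real"

definition mp_mult :: "nat \<Rightarrow> mat \<Rightarrow> mat \<Rightarrow> mat" where
  "mp_mult n A B = (\<lambda>i j. Max ((\<lambda>t. A i t + B t j) ` {..<n}))"

definition mp_plus :: "mat \<Rightarrow> mat \<Rightarrow> mat" where
  "mp_plus A B = (\<lambda>i j. max (A i j) (B i j))"

(* k-fold max-plus power, k >= 1; the case k = 0 is a junk value never used *)
fun mp_pow :: "nat \<Rightarrow> mat \<Rightarrow> nat \<Rightarrow> mat" where
  "mp_pow n A 0 = A"
| "mp_pow n A (Suc 0) = A"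
| "mp_pow n A (Suc (Suc k)) = mp_mult n A (mp_pow n A (Suc k))"

definition mp_smult :: "real \<Rightarrow> mat \<Rightarrow> mat" where
  "mp_smult a A = (\<lambda>i j. a + A i j)"

definition cycles :: "nat \<Rightarrow> nat list set" where
  "cycles n = {xs. xs \<noteq> [] \<and> distinct xs \<and> set xs \<subseteq> {..<n}}"

definition cycle_mean :: "mat \<Rightarrow> nat list \<Rightarrow> real" where
  "cycle_mean A xs =
     (\<Sum>j<length xs. A (xs ! j) (xs ! ((j + 1) mod length xs))) / real (length xs)"

definition mcm :: "nat \<Rightarrow> mat \<Rightarrow> real" where
  "mcm n A = Max (cycle_mean A ` cycles n)"

definition lam_norm :: "nat \<Rightarrow> mat \<Rightarrow> mat" where
  "lam_norm n A = mp_smult (- mcm n A) A"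

definition Gamma :: "nat \<Rightarrow> mat \<Rightarrow> mat" where
  "Gamma n A = (\<lambda>i j. Max ((\<lambda>k. mp_pow n A k i j) ` {1..n}))"

definition pdiag :: "(nat \<Rightarrow> real) \<Rightarrow> mat" where
  "pdiag d = (\<lambda>i j. if i = j then d i else 0)"

end

theory Submission
  imports Defs
begin

lemma finite_cycles: "finite (cycles n)"
proof -
  have "cycles n \<subseteq> {xs. set xs \<subseteq> {..<n} \<and> length xs \<le> n}"
    unfolding cycles_def
    by (auto simp: distinct_card[symmetric] dest: card_mono[of "{..<n}", rotated])
  moreover have "finite {xs. set xs \<subseteq> {..<n} \<and> length xs \<le> n}"
    by (rule finite_lists_length_le) simp
  ultimately show ?thesis by (rule finite_subset)
qed

lemma mcm_ge:
  assumes "xs \<in> cycles n" shows "cycle_mean A xs \<le> mcm n A"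
  unfolding mcm_def using assms finite_cycles by auto

lemma mult_le:
  assumes "n > 0" "\<And>t. t < n \<Longrightarrow> A i t + B t j \<le> c"
  shows "mp_mult n A B i j \<le> c"
  unfolding mp_mult_def using assms by (subst Max_le_iff) auto

lemma mult_ge:
  assumes "t < n"
  shows "A i t + B t j \<le> mp_mult n A B i j"
  unfolding mp_mult_def using assms by (intro Max_ge) auto

theorem lemma5p2:
  fixes n :: nat and d :: "nat \<Rightarrow> real"
  assumes "n \<ge> 2"
    and "\<And>i j. i \<le> j \<Longrightarrow> j < n \<Longrightarrow> d i \<le> d j"
  shows "\<forall>i<n. \<forall>j<n.
           Gamma n (lam_norm n (pdiag d)) i j
           = mp_plus (lam_norm n (pdiag d)) (mp_pow n (lam_norm n (pdiag d)) 2) i j"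
proof -
  define m where "m = mcm n (pdiag d)"
  define A where "A = lam_norm n (pdiag d)"
  have A: "A i j = - m + (if i = j then d i else 0)" for i j
    unfolding A_def lam_norm_def mp_smult_def pdiag_def m_def by simp
  have dm: "d i \<le> m" if "i < n" for i
  proof -
    have "[i] \<in> cycles n" using that by (simp add: cycles_def)
    from mcm_ge[OF this, of "pdiag d"] show ?thesis
      by (simp add: cycle_mean_def pdiag_def m_def)
  qed
  have m0: "0 \<le> m"
  proof -
    have "[0,1] \<in> cycles n" using assms(1) by (auto simp: cycles_def)
    from mcm_ge[OF this, of "pdiag d"] show ?thesis
      by (simp add: cycle_mean_def pdiag_def m_def)
  qed
  define M where "M i j = (if i = j then max (A i i) (2*(-m)) else -m)" for i j
  have AM: "A i j \<le> M i j" if "i<n" "j<n" for i j using m0 by (simp add: M_def A)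
  have AMM: "A i t + M t j \<le> M i j" if "i<n" "j<n" "t<n" for i j t
    using m0 dm that by (auto simp: M_def A)
  have powS: "\<forall>i j. i<n \<longrightarrow> j<n \<longrightarrow> mp_pow n A (Suc k) i j \<le> M i j" for k
  proof (induction k)
    case 0 then show ?case using AM by simp
  next
    case (Suc k)
    show ?case
    proof (intro allI impI)
      fix i j assume ij: "i<n" "j<n"
      show "mp_pow n A (Suc (Suc k)) i j \<le> M i j"
        unfolding mp_pow.simps
      proof (rule mult_le)
        show "0 < n" using assms(1) by simp
        fix t assume t: "t < n"
        have "A i t + mp_pow n A (Suc k) t j \<le> A i t + M t j" using Suc t ij by simp
        also have "\<dots> \<le> M i j" using AMM ij t by simp
        finally show "A i t + mp_pow n A (Suc k) t j \<le> M i j" .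
      qed
    qed
  qed
  have MP: "M i j \<le> mp_plus A (mp_pow n A 2) i j" if ij: "i<n" "j<n" for i j
  proof (cases "i = j")
    case True
    define t where "t = (if i = 0 then 1 else 0::nat)"
    have t: "t < n" "t \<noteq> i" using assms(1) by (auto simp: t_def)
    have "A i t + A t i \<le> mp_pow n A 2 i i"
      using mult_ge[OF t(1), of A i A i] by (simp add: numeral_2_eq_2)
    then show ?thesis using True t by (auto simp: M_def A mp_plus_def)
  next
    case False then show ?thesis by (auto simp: M_def A mp_plus_def)
  qed
  show ?thesis
  proof (intro allI impI)
    fix i j assume ij: "i<n" "j<n"
    have fin: "finite ((\<lambda>k. mp_pow n A k i j) ` {1..n})" by simp
    have ne: "(\<lambda>k. mp_pow n A k i j) ` {1..n} \<noteq> {}" using assms(1) by auto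
    have le: "Gamma n A i j \<le> mp_plus A (mp_pow n A 2) i j"
      unfolding Gamma_def
    proof (subst Max_le_iff[OF fin ne], clarify)
      fix k assume k: "k \<in> {1..n}"
      then obtain k' where "k = Suc k'" by (cases k) auto
      then show "mp_pow n A k i j \<le> mp_plus A (mp_pow n A 2) i j"
        using powS[of k'] MP[OF ij] ij by (meson order_trans)
    qed
    have g1: "mp_pow n A 1 i j \<le> Gamma n A i j" unfolding Gamma_def
      using assms(1) by (intro Max_ge) (auto intro!: image_eqI[where x=1])
    have g2: "mp_pow n A 2 i j \<le> Gamma n A i j" unfolding Gamma_def
      using assms(1) by (intro Max_ge) auto
    have "mp_plus A (mp_pow n A 2) i j \<le> Gamma n A i j"
      using g1 g2 by (simp add: mp_plus_def)
    with le have "Gamma n A i j = mp_plus A (mp_pow n A 2) i j" by simp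
    then show "Gamma n (lam_norm n (pdiag d)) i j = mp_plus (lam_norm n (pdiag d)) (mp_pow n (lam_norm n (pdiag d)) 2) i j" unfolding A_def .
  qed
qed

end
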